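(* Under the hypotheses and notation of the recursion above (birational $\Phi_n$ of $\mathbf{CP}^2$ of degree $n$ with only ordinary fundamental points, equivalent pairs $(\alpha_j,\beta_j,m_j)$, $j=1,\dots,\sigma_1$), let $$\Lambda(\lambda)=\begin{pmatrix}\lambda-n & i^{(-1)}_{\beta_1} & \cdots & i^{(-1)}_{\beta_{\sigma_1}}\\ -i_{\alpha_1} & \lambda^{m_1+1}+i_{\alpha_1\beta_1} & \cdots & i_{\alpha_1\beta_{\sigma_1}}\\ \vdots & \vdots & \ddots & \vdots\\ -i_{\alpha_{\sigma_1}} & i_{\alpha_{\sigma_1}\beta_1} & \cdots & \lambda^{m_{\sigma_1}+1}+i_{\alpha_{\sigma_1}\beta_{\sigma_1}}\end{pmatrix},$$ i.e. the $(1,1)$ entry is $\lambda-n$, the $(1,l+1)$ entry is $i^{(-1)}_{\beta_l}$, the $(j+1,1)$ entry is $-i_{\alpha_j}$, and the $(j+1,l+1)$ entry is $i_{\alpha_j\beta_l}+\delta_{jl}\lambda^{m_j+1}$. Then $\det\Lambda(\lambda)=\lambda^m+\sum_{i=0}^{m-1}a_i\lambda^i$ is a monic polynomial with integer coefficients of degree $m=m_1+\dots+m_{\sigma_1}+\sigma_1+1$, and the degrees $d(k)=\deg\Phi_n^k$ satisfy the autonomous linear difference equation $$d(k+m)+\sum_{i=0}^{m-1}a_i\,d(k+i)=0\qquad(k\ge 0 \text{ sufficiently large for all terms to be defined by the recursion}).$$ Consequently $d(k)=\sum_{i=1}^{l}\lambda_i^k\sum_{j=0}^{s_i-1}c_{ij}k^j$,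 where $\lambda_1,\dots,\lambda_l$ are the distinct roots of $\det\Lambda(\lambda)=0$ with multiplicities $s_1,\dots,s_l$ and the constants $c_{ij}$ are determined by the initial values $d(1),\dots,d(m)$; in particular, if all roots satisfy $|\lambda_i|=1$ then $d(k)$ grows at most polynomially in $k$.
   Context: A birational map $\Phi_n$ of $\mathbf{CP}^2$ is written $z\mapsto z'$, $z'_1:z'_2:z'_3=\phi_1(z):\phi_2(z):\phi_3(z)$, with $\phi_i$ coprime homogeneous polynomials of degree $n$, inverse of the same form; $d(k)=\deg\Phi_n^k$. Fundamental points $O_\alpha$ (multiplicities $i_\alpha$) of $\Phi_n$ and $O^{(-1)}_\beta$ (multiplicities $i^{(-1)}_\beta$) of $\Phi_n^{-1}$, $\alpha,\beta=1,\dots,\sigma$, all assumed ordinary; $i_{\alpha\beta}$ is the multiplicity at $O_\alpha$ of the principal curve $J_\beta$ contracted by $\Phi_n$ to $O^{(-1)}_\beta$. The equivalent pairs are the $\sigma_1$ pairs $(O_{\alpha_j},O^{(-1)}_{\beta_j})$ with $\Phi_n^{-m_j}(O_{\alpha_j})=O^{(-1)}_{\beta_j}$, $m_j\ge 0$, all other fundamental points having backward orbits under $\Phi_n^{-1}$ that never meet $\{O^{(-1)}_\beta\}$. The multiplicities $\gamma_\alpha(k)$ of a general member of the linear system of $\Phi_n^k$ at $O_\alpha$ and $d(k)$ satisfy $d(0)=1$, $d(1)=n$, $\gamma_\alpha(1)=i_\alpha$, $\gamma_\alpha(k)=0$ for $k\le0$, $d(k)=n\,d(k-1)-\sum_{l=1}^{\sigma_1}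 i^{(-1)}_{\beta_l}\gamma_{\alpha_l}(k-m_l-1)$ and $\gamma_{\alpha_j}(k)=i_{\alpha_j}d(k-1)-\sum_{l=1}^{\sigma_1} i_{\alpha_j\beta_l}\gamma_{\alpha_l}(k-m_l-1)$. *)

theory Defs
  imports "Jordan_Normal_Form.Determinant" "HOL-Computational_Algebra.Polynomial" Complex_Main

begin

text \<open>Row/column 0 correspond to the first row/column of the paper; row j+1 / column l+1
  correspond to the equivalent pairs j, l (indices j, l < sigma1).
  Parameters: n degree, alpha j / beta j the fundamental points of the j-th equivalent pair,
  m j the shifts, i the multiplicities i_alpha, iinv the multiplicities i^(-1)_beta,
  iab alpha beta the multiplicity i_{alpha beta}.\<close>
definition Lambda ::
  "nat \<Rightarrow> nat \<Rightarrow> (nat \<Rightarrow> nat) \<Rightarrow> (nat \<Rightarrow> nat) \<Rightarrow> (nat \<Rightarrow> nat)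
   \<Rightarrow> (nat \<Rightarrow> nat) \<Rightarrow> (nat \<Rightarrow> nat) \<Rightarrow> (nat \<Rightarrow> nat \<Rightarrow> nat) \<Rightarrow> int poly mat" where
  "Lambda n \<sigma>1 \<alpha> \<beta> m i iinv iab =
     mat (Suc \<sigma>1) (Suc \<sigma>1) (\<lambda>(r, c).
       if r = 0 \<and> c = 0 then [:- of_nat n, 1:]
       else if r = 0 then [:of_nat (iinv (\<beta> (c - 1))):]
       else if c = 0 then [:- of_nat (i (\<alpha> (r - 1))):]
       else [:of_nat (iab (\<alpha> (r - 1)) (\<beta> (c - 1))):]
            + (if r = c then monom 1 (m (r - 1) + 1) else 0))"

end

theory Submission
  imports Defs "HOL-Computational_Algebra.Fundamental_Theorem_Algebra"
begin


definition ev :: "'a::comm_ring_1 poly \<Rightarrow> (nat \<Rightarrow> 'a) \<Rightarrow> nat \<Rightarrow> 'a" where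
  "ev p f k = (\<Sum>j\<le>degree p. coeff p j * f (k + j))"

lemma ev_alt: "degree p \<le> N \<Longrightarrow> ev p f k = (\<Sum>j\<le>N. coeff p j * f (k + j))"
  unfolding ev_def
  by (rule sum.mono_neutral_left) (auto simp: coeff_eq_0)

lemma ev_add: "ev (p + q) f k = ev p f k + ev q f k"
proof -
  let ?N = "max (degree p) (degree q)"
  have "degree (p+q) \<le> ?N" by (rule degree_add_le) auto
  then show ?thesis
    by (simp add: ev_alt[of _ ?N] sum.distrib algebra_simps)
qed

lemma ev_smult: "ev (smult c p) f k = c * ev p f k"
proof -
  have "ev (smult c p) f k = (\<Sum>j\<le>degree p. coeff (smult c p) j * f (k + j))"
    by (rule ev_alt) (simp add: degree_smult_le)
  then show ?thesis by (simp add: ev_def sum_distrib_left mult.assoc)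
qed

lemma ev_pCons0: "ev (pCons 0 p) f k = ev p f (Suc k)"
proof -
  have "ev (pCons 0 p) f k = (\<Sum>j\<le>Suc (degree p). coeff (pCons 0 p) j * f (k + j))"
    by (rule ev_alt) (simp add: degree_pCons_le)
  also have "\<dots> = (\<Sum>j\<le>degree p. coeff p j * f (Suc k + j))"
    by (subst sum.atMost_Suc_shift) simp
  finally show ?thesis by (simp add: ev_def)
qed

lemma ev_const: "ev [:c:] f k = c * f k"
  by (simp add: ev_def)

lemma ev_mult: "ev (p * q) f k = ev p (ev q f) k"
proof (induction p arbitrary: k)
  case 0
  then show ?case by (simp add: ev_def)
next
  case (pCons a p)
  have "pCons a p * q = smult a q + pCons 0 (p * q)" by simp
  then have "ev (pCons a p * q) f k = a * ev q f k + ev p (ev q f) (Suc k)"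
    by (simp only: ev_add ev_smult ev_pCons0 pCons.IH)
  moreover have "ev (pCons a p) g k = a * g k + ev p g (Suc k)" for g
  proof -
    have "pCons a p = [:a:] + pCons 0 p" by simp
    then show ?thesis by (metis ev_add ev_const ev_pCons0)
  qed
  ultimately show ?case by simp
qed

lemma ev_0f: "ev p (\<lambda>_. 0) k = 0" by (simp add: ev_def)

lemma ev_fsum: "finite A \<Longrightarrow> ev p (\<lambda>k. \<Sum>c\<in>A. g c k) k = (\<Sum>c\<in>A. ev p (g c) k)"
  unfolding ev_def by (simp add: sum_distrib_left sum.swap[of _ A])

lemma ev_psum: "finite A \<Longrightarrow> ev (\<Sum>c\<in>A. g c) f k = (\<Sum>c\<in>A. ev (g c) f k)"
proof (induction A rule: finite_induct)
  case empty then show ?case by (simp add: ev_def)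
next
  case (insert x F) then show ?case by (simp add: ev_add)
qed

lemma ev_monom: "ev (monom 1 j) f k = f (k + j)"
proof -
  have "ev (monom 1 j) f k = (\<Sum>i\<le>j. coeff (monom 1 j) i * f (k + i))"
    by (rule ev_alt) (simp add: degree_monom_le)
  also have "\<dots> = (\<Sum>i\<in>{j}. coeff (monom 1 j) i * f (k + i))"
    by (rule sum.mono_neutral_right) (auto simp: coeff_monom)
  finally show ?thesis by (simp add: coeff_monom)
qed

lemma ev_linear: "ev [:a, 1:] f k = a * f k + f (Suc k)"
  by (simp add: ev_def)



definition app :: "'a::comm_ring_1 poly mat \<Rightarrow> (nat \<Rightarrow> nat \<Rightarrow> 'a) \<Rightarrow> nat \<Rightarrow> nat \<Rightarrow> 'a" where
  "app A U r k = (\<Sum>c\<in>{0..<dim_col A}. ev (A $$ (r, c)) (U c) k)"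

lemma app_mult:
  assumes A: "A \<in> carrier_mat n n" and B: "B \<in> carrier_mat n n" and r: "r < n"
  shows "app (A * B) U r k = app A (\<lambda>t. app B U t) r k"
proof -
  have "app (A * B) U r k = (\<Sum>c\<in>{0..<n}. ev (\<Sum>t\<in>{0..<n}. A $$ (r, t) * B $$ (t, c)) (U c) k)"
    unfolding app_def using A B r
    by (intro sum.cong) (auto simp: scalar_prod_def)
  also have "\<dots> = (\<Sum>c\<in>{0..<n}. \<Sum>t\<in>{0..<n}. ev (A $$ (r, t)) (ev (B $$ (t, c)) (U c)) k)"
    by (simp add: ev_psum ev_mult)
  also have "\<dots> = (\<Sum>t\<in>{0..<n}. \<Sum>c\<in>{0..<n}. ev (A $$ (r, t)) (ev (B $$ (t, c)) (U c)) k)"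
    by (rule sum.swap)
  also have "\<dots> = app A (\<lambda>t. app B U t) r k"
    unfolding app_def using A B by (simp add: ev_fsum)
  finally show ?thesis .
qed

lemma app_zero: "(\<And>t k. t < dim_col A \<Longrightarrow> U t k = 0) \<Longrightarrow> app A U r k = 0"
proof -
  assume h: "\<And>t k. t < dim_col A \<Longrightarrow> U t k = 0"
  have "ev (A $$ (r, c)) (U c) k = 0" if "c < dim_col A" for c
  proof -
    have "U c = (\<lambda>_. 0)" using h that by auto
    then show ?thesis by (simp add: ev_0f)
  qed
  then show ?thesis unfolding app_def by simp
qed

lemma det_annihilates:
  assumes A: "A \<in> carrier_mat n n" and n: "0 < n"
    and h: "\<And>r k. r < n \<Longrightarrow> app A U r k = 0"
  shows "ev (det A) (U 0) k = 0"
proof -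
  have "app (adj_mat A * A) U 0 k = app (adj_mat A) (\<lambda>t. app A U t) 0 k"
    by (rule app_mult[OF adj_mat(1)[OF A] A n])
  also have "\<dots> = 0"
    by (rule app_zero) (use h adj_mat(1)[OF A] in auto)
  finally have z: "app (adj_mat A * A) U 0 k = 0" .
  have "app (adj_mat A * A) U 0 k = app (det A \<cdot>\<^sub>m 1\<^sub>m n) U 0 k"
    by (simp add: adj_mat(3)[OF A])
  also have "\<dots> = (\<Sum>c\<in>{0..<n}. ev (if c = 0 then det A else 0) (U c) k)"
    unfolding app_def using n by (intro sum.cong) auto
  also have "\<dots> = (\<Sum>c\<in>{0}. ev (if c = 0 then det A else 0) (U c) k)"
    by (rule sum.mono_neutral_right) (use n in \<open>auto simp: ev_def\<close>)
  also have "\<dots> = ev (det A) (U 0) k" by simp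
  finally show ?thesis using z by simp
qed



lemma partB:
  fixes n \<sigma>1 :: nat
    and \<alpha> \<beta> m :: "nat \<Rightarrow> nat"
    and i iinv :: "nat \<Rightarrow> nat" and iab :: "nat \<Rightarrow> nat \<Rightarrow> nat"
    and d :: "nat \<Rightarrow> int" and \<gamma> :: "nat \<Rightarrow> int \<Rightarrow> int"
  assumes rec_d: "\<And>k. k \<ge> 1 \<Longrightarrow>
        d k = int n * d (k - 1)
              - (\<Sum>l<\<sigma>1. int (iinv (\<beta> l)) * \<gamma> (\<alpha> l) (int k - int (m l) - 1))"
    and rec_g: "\<And>j k. j < \<sigma>1 \<Longrightarrow> k \<ge> 1 \<Longrightarrow>
        \<gamma> (\<alpha> j) (int k) = int (i (\<alpha> j)) * d (k - 1)
              - (\<Sum>l<\<sigma>1. int (iab (\<alpha> j) (\<beta> l)) * \<gamma> (\<alpha> l) (int k - int (m l) - 1))"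
  shows "ev (det (Lambda n \<sigma>1 \<alpha> \<beta> m i iinv iab)) d k = 0"
proof -
  define L where "L = Lambda n \<sigma>1 \<alpha> \<beta> m i iinv iab"
  define U where "U = (\<lambda>c k. if c = 0 then d k else \<gamma> (\<alpha> (c - 1)) (int k - int (m (c - 1))))"
  have L: "L \<in> carrier_mat (Suc \<sigma>1) (Suc \<sigma>1)" unfolding L_def Lambda_def by simp
  have "app L U r k = 0" if r: "r < Suc \<sigma>1" for r k
  proof -
    have "app L U r k = ev (L $$ (r, 0)) (U 0) k + (\<Sum>l<\<sigma>1. ev (L $$ (r, Suc l)) (U (Suc l)) k)"
      unfolding app_def using L by (simp add: atLeast0LessThan del: sum.lessThan_Suc add: sum.lessThan_Suc_shift)
    also have "\<dots> = 0"
    proof (cases r)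
      case 0
      have e0: "ev (L $$ (r, 0)) (U 0) k = d (Suc k) - int n * d k"
        using 0 by (simp add: L_def Lambda_def U_def ev_linear)
      have e1: "ev (L $$ (r, Suc l)) (U (Suc l)) k = int (iinv (\<beta> l)) * \<gamma> (\<alpha> l) (int k - int (m l))"
        if "l < \<sigma>1" for l
        using 0 that by (simp add: L_def Lambda_def U_def ev_const)
      have "d (Suc k) = int n * d k - (\<Sum>l<\<sigma>1. int (iinv (\<beta> l)) * \<gamma> (\<alpha> l) (int k - int (m l)))"
        using rec_d[of "Suc k"] by simp
      then show ?thesis using e0 e1 by simp
    next
      case (Suc j)
      with r have j: "j < \<sigma>1" by simp
      have e0: "ev (L $$ (r, 0)) (U 0) k = - int (i (\<alpha> j)) * d k"
        using Suc j by (simp add: L_def Lambda_def U_def ev_const)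
      have e1: "ev (L $$ (r, Suc l)) (U (Suc l)) k = int (iab (\<alpha> j) (\<beta> l)) * \<gamma> (\<alpha> l) (int k - int (m l))
             + (if j = l then \<gamma> (\<alpha> j) (int k + 1) else 0)"
        if "l < \<sigma>1" for l
      proof -
        have "L $$ (r, Suc l) = [:int (iab (\<alpha> j) (\<beta> l)):] + (if j = l then monom 1 (m j + 1) else 0)"
          using Suc j that by (simp add: L_def Lambda_def)
        then show ?thesis
          by (cases "j = l") (simp_all add: ev_add ev_const ev_monom U_def ev_0f[unfolded ev_def] algebra_simps ev_def[of 0])
      qed
      have "(\<Sum>l<\<sigma>1. ev (L $$ (r, Suc l)) (U (Suc l)) k) =
          (\<Sum>l<\<sigma>1. int (iab (\<alpha> j) (\<beta> l)) * \<gamma> (\<alpha> l) (int k - int (m l))) + \<gamma> (\<alpha> j) (int k + 1)"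
        using j by (simp add: e1 sum.distrib)
      moreover have "\<gamma> (\<alpha> j) (int (Suc k)) = int (i (\<alpha> j)) * d k
              - (\<Sum>l<\<sigma>1. int (iab (\<alpha> j) (\<beta> l)) * \<gamma> (\<alpha> l) (int k - int (m l)))"
        using rec_g[OF j, of "Suc k"] by simp
      ultimately show ?thesis using e0 by (simp add: add.commute)
    qed
    finally show ?thesis .
  qed
  from det_annihilates[OF L _ this] have "ev (det L) (U 0) k = 0" by simp
  moreover have "U 0 = d" unfolding U_def by auto
  ultimately show ?thesis unfolding L_def by simp
qed



lemma lin_times_monic:
  fixes Q :: "int poly"
  assumes "degree Q = D" "lead_coeff Q = 1"
  shows "degree ([:a, 1:] * Q) = D + 1 \<and> lead_coeff ([:a, 1:] * Q) = 1"
proof -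
  have "Q \<noteq> 0" using assms by auto
  moreover have "[:a, 1:] \<noteq> (0::int poly)" by simp
  ultimately have "degree ([:a, 1:] * Q) = degree [:a, 1:] + degree Q"
    by (intro degree_mult_eq) auto
  moreover have "lead_coeff ([:a, 1:] * Q) = lead_coeff [:a, 1:] * lead_coeff Q"
    by (rule lead_coeff_mult)
  moreover have "degree [:a, 1:] = (1::nat)" "lead_coeff [:a, 1:] = (1::int)" by simp_all
  ultimately show ?thesis using assms by simp
qed

lemma partA:
  fixes n \<sigma>1 :: nat and \<alpha> \<beta> m :: "nat \<Rightarrow> nat"
    and i iinv :: "nat \<Rightarrow> nat" and iab :: "nat \<Rightarrow> nat \<Rightarrow> nat"
  shows "lead_coeff (det (Lambda n \<sigma>1 \<alpha> \<beta> m i iinv iab)) = 1 \<and>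
         degree (det (Lambda n \<sigma>1 \<alpha> \<beta> m i iinv iab)) = (\<Sum>j<\<sigma>1. m j) + \<sigma>1 + 1"
proof -
  define A where "A = Lambda n \<sigma>1 \<alpha> \<beta> m i iinv iab"
  define N where "N = Suc \<sigma>1"
  define S where "S = {0..<N}"
  define w where "w = (\<lambda>c. if c = 0 then 1 else m (c - 1) + 1)"
  define deg where "deg = (\<Sum>j<\<sigma>1. m j) + \<sigma>1 + 1"
  have A: "A \<in> carrier_mat N N" unfolding A_def Lambda_def N_def by simp
  have fS: "finite S" unfolding S_def by simp
  have sumw: "(\<Sum>c\<in>S. w c) = deg"
    unfolding S_def N_def w_def deg_def
    by (simp add: atLeast0LessThan sum.lessThan_Suc_shift sum.distrib del: sum.lessThan_Suc)
      (induct \<sigma>1; simp)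
  have entry: "degree (A $$ (r, c)) \<le> (if r = c then w c else 0)" if "r < N" "c < N" for r c
  proof -
    consider "r = 0" "c = 0" | "r = 0" "c \<noteq> 0" | "r \<noteq> 0" "c = 0" | "r \<noteq> 0" "c \<noteq> 0" "r = c"
      | "r \<noteq> 0" "c \<noteq> 0" "r \<noteq> c" by blast
    then show ?thesis
    proof cases
      case 5
      then show ?thesis using that unfolding A_def Lambda_def w_def N_def by simp
    next
      case 4
      have "degree ([:int (iab (\<alpha> (r - 1)) (\<beta> (c - 1))):] + monom 1 (m (c - 1) + 1)) \<le> m (c - 1) + 1"
        by (rule order.trans[OF degree_add_le]) (auto simp: degree_monom_eq)
      then show ?thesis using that 4 unfolding A_def Lambda_def w_def N_def by simp
    qed (use that in \<open>auto simp: A_def Lambda_def w_def N_def\<close>)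
  qed
  define T where "T = (\<lambda>p. signof p * (\<Prod>i\<in>S. A $$ (i, p i)) :: int poly)"
  define P where "P = {p. p permutes S}"
  have fP: "finite P" unfolding P_def using fS by (rule finite_permutations)
  have idP: "id \<in> P" unfolding P_def by (simp add: permutes_id)
  have det: "det A = T id + (\<Sum>p\<in>P - {id}. T p)"
    unfolding det_def'[OF A] T_def P_def S_def
    by (subst sum.remove[OF fP[unfolded P_def S_def] idP[unfolded P_def S_def]]) simp
  have dR: "degree (\<Sum>p\<in>P - {id}. T p) \<le> deg - 1"
  proof (rule degree_sum_le)
    show "finite (P - {id})" using fP by simp
    fix p assume p: "p \<in> P - {id}"
    then have pp: "p permutes S" and pid: "p \<noteq> id" unfolding P_def by auto
    have "degree (T p) \<le> degree (signof p :: int poly) + degree (\<Prod>i\<in>S. A $$ (i, p i))"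
      unfolding T_def by (rule degree_mult_le)
    also have "\<dots> \<le> (\<Sum>i\<in>S. degree (A $$ (i, p i)))"
      using degree_prod_sum_le[OF fS, of "\<lambda>i. A $$ (i, p i)"] by (simp add: o_def)
    also have "\<dots> < (\<Sum>i\<in>S. w (p i))"
    proof (rule sum_strict_mono_ex1[OF fS])
      show "\<forall>x\<in>S. degree (A $$ (x, p x)) \<le> w (p x)"
      proof
        fix x assume xS: "x \<in> S"
        then have "p x \<in> S" using permutes_in_image[OF pp] by simp
        then have "degree (A $$ (x, p x)) \<le> (if x = p x then w (p x) else 0)"
          using entry[of x "p x"] xS unfolding S_def by simp
        then show "degree (A $$ (x, p x)) \<le> w (p x)" by (simp split: if_splits)
      qed
      obtain x where x: "p x \<noteq> x" using pid by (metis id_apply ext)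
      then have xS: "x \<in> S" using permutes_not_in[OF pp] by blast
      have "degree (A $$ (x, p x)) \<le> 0" using entry[of x "p x"] x xS permutes_in_image[OF pp]
        unfolding S_def by auto
      moreover have "w (p x) > 0" unfolding w_def by auto
      ultimately show "\<exists>x\<in>S. degree (A $$ (x, p x)) < w (p x)" using xS by (intro bexI[of _ x]) auto
    qed
    also have "(\<Sum>i\<in>S. w (p i)) = deg"
      using sum.permute[OF pp, of w] sumw by (simp add: o_def)
    finally show "degree (T p) \<le> deg - 1" by simp
  qed
  have diag: "(\<Prod>i\<in>S. A $$ (i, i)) = [:- of_nat n, 1:] * (\<Prod>l<\<sigma>1. [:of_nat (iab (\<alpha> l) (\<beta> l)):] + monom 1 (m l + 1))"
    unfolding S_def N_def A_def Lambda_def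
    by (simp add: atLeast0LessThan prod.lessThan_Suc_shift del: prod.lessThan_Suc)
  have fac: "degree ([:of_nat (iab (\<alpha> l) (\<beta> l)):] + monom 1 (m l + 1) :: int poly) = m l + 1 \<and>
      lead_coeff ([:of_nat (iab (\<alpha> l) (\<beta> l)):] + monom 1 (m l + 1) :: int poly) = 1" for l
  proof -
    have "degree ([:of_nat (iab (\<alpha> l) (\<beta> l)):] :: int poly) < degree (monom 1 (m l + 1) :: int poly)"
      by (simp add: degree_monom_eq)
    then show ?thesis
      by (simp add: degree_add_eq_right lead_coeff_add_le degree_monom_eq)
  qed
  have nz: "[:of_nat (iab (\<alpha> l) (\<beta> l)):] + monom 1 (m l + 1) \<noteq> (0 :: int poly)" for l
    using fac[of l] by auto
  have dT: "degree (T id) = deg \<and> lead_coeff (T id) = 1"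
  proof -
    define Q where "Q = (\<Prod>l<\<sigma>1. [:of_nat (iab (\<alpha> l) (\<beta> l)):] + monom 1 (m l + 1) :: int poly)"
    have Tid: "T id = [:- of_nat n, 1:] * Q"
      unfolding T_def Q_def using diag by simp
    have "degree (\<Prod>l<\<sigma>1. [:of_nat (iab (\<alpha> l) (\<beta> l)):] + monom 1 (m l + 1) :: int poly) = (\<Sum>l<\<sigma>1. m l + 1)"
      by (subst degree_prod_eq_sum_degree) (use nz fac in auto)
    then have dQ: "degree Q = (\<Sum>l<\<sigma>1. m l + 1)" unfolding Q_def .
    have "lead_coeff (\<Prod>l<\<sigma>1. [:of_nat (iab (\<alpha> l) (\<beta> l)):] + monom 1 (m l + 1) :: int poly) = 1"
      using fac by (simp add: lead_coeff_prod)
    then have lQ: "lead_coeff Q = 1" unfolding Q_def .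
    have eq: "(\<Sum>l<\<sigma>1. m l + 1) + 1 = deg" unfolding deg_def by (simp add: sum.distrib del: One_nat_def)
    show ?thesis
      unfolding Tid eq[symmetric] by (rule lin_times_monic[OF dQ lQ])
  qed
  have lt: "degree (\<Sum>p\<in>P - {id}. T p) < degree (T id)"
    using dR dT unfolding deg_def by simp
  show ?thesis
    unfolding A_def[symmetric] deg_def[symmetric] det
  proof -
    have "degree (T id + (\<Sum>p\<in>P - {id}. T p)) = degree (T id)"
      by (rule degree_add_eq_left[OF lt])
    moreover have "lead_coeff (T id + (\<Sum>p\<in>P - {id}. T p)) = lead_coeff (T id)"
      using lead_coeff_add_le[OF lt] by (simp add: add.commute)
    ultimately show "lead_coeff (T id + (\<Sum>p\<in>P - {id}. T p)) = 1 \<and> degree (T id + (\<Sum>p\<in>P - {id}. T p)) = deg"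
      using dT by metis
  qed
qed



definition Lop :: "complex \<Rightarrow> complex \<Rightarrow> complex poly \<Rightarrow> complex poly" where
  "Lop w z q = smult w (q \<circ>\<^sub>p [:1, 1:]) - smult z q"

lemma Lop_add: "Lop w z (p + q) = Lop w z p + Lop w z q"
  unfolding Lop_def by (simp add: pcompose_add smult_add_right algebra_simps)

lemma Lop_0: "Lop w z 0 = 0" unfolding Lop_def by simp

lemma coeff_lin_pow: "coeff ([:1, 1:] ^ N :: complex poly) j = of_nat (N choose j)"
proof (cases "j \<le> N")
  case True
  then show ?thesis using coeff_linear_poly_power[OF True, of 1 1] by simp
next
  case False
  then have "coeff ([:1, 1:] ^ N :: complex poly) j = 0"
    by (intro coeff_eq_0) (simp add: degree_linear_power)
  then show ?thesis using False by simp
qed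

lemma coeff_Lop_monom:
  "coeff (Lop w z (monom b N)) j = b * (w * of_nat (N choose j) - z * (if j = N then 1 else 0))"
proof -
  have "monom b N \<circ>\<^sub>p [:1, 1:] = smult b ([:1, 1:] ^ N)"
    by (rule poly_eq_poly_eq_iff[THEN iffD1]) (auto simp: poly_pcompose poly_monom add.commute)
  then show ?thesis unfolding Lop_def by (simp add: coeff_lin_pow coeff_monom algebra_simps)
qed

lemma Lsol:
  assumes wz: "w \<noteq> z \<or> z \<noteq> 0"
  shows "\<exists>q. Lop w z q = p \<and> (q \<noteq> 0 \<longrightarrow> degree q \<le> degree p + (if w = z then 1 else 0))"
proof (induction "degree p" arbitrary: p rule: less_induct)
  case less
  show ?case
  proof (cases "p = 0")
    case True
    then show ?thesis by (intro exI[of _ 0]) (simp add: Lop_0)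
  next
    case False
    define n where "n = degree p"
    define a where "a = lead_coeff p"
    define \<delta> :: nat where "\<delta> = (if w = z then 1 else 0)"
    define N where "N = n + \<delta>"
    define c where "c = (if w = z then z * of_nat N else w - z)"
    have "complex_of_nat (n + 1) \<noteq> 0" by (simp only: of_nat_eq_0_iff)
    then have c0: "c \<noteq> 0" using wz unfolding c_def N_def \<delta>_def by auto
    define q1 where "q1 = monom (a / c) N"
    have cq: "coeff (Lop w z q1) j = (if j = n then a else if j > n then 0 else coeff (Lop w z q1) j)" for j
    proof -
      have "coeff (Lop w z q1) j = a / c * (w * of_nat (N choose j) - z * (if j = N then 1 else 0))"
        unfolding q1_def by (rule coeff_Lop_monom)
      moreover
      { assume "j = n"
        then have "a / c * (w * of_nat (N choose j) - z * (if j = N then 1 else 0)) = a"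
          using c0 unfolding c_def N_def \<delta>_def by (auto simp: field_simps) }
      moreover
      { assume j: "j > n"
        then have "a / c * (w * of_nat (N choose j) - z * (if j = N then 1 else 0)) = 0"
          unfolding c_def N_def \<delta>_def by (cases "w = z") (auto simp: binomial_eq_0)
      }
      ultimately show ?thesis by auto
    qed
    define r where "r = p - Lop w z q1"
    have cr: "coeff r j = 0" if "j \<ge> n" for j
    proof (cases "j = n")
      case True
      then show ?thesis using cq[of j] unfolding r_def a_def n_def by simp
    next
      case False
      then have "j > n" using that by simp
      then show ?thesis using cq[of j] unfolding r_def n_def by (simp add: coeff_eq_0)
    qed
    obtain q2 where q2: "Lop w z q2 = r" "degree q2 \<le> N"
    proof (cases "r = 0")
      case True
      then show ?thesis using that[of 0] by (simp add: Lop_0)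
    next
      case False
      have "degree r < n"
      proof (rule ccontr)
        assume "\<not> degree r < n"
        then have "coeff r (degree r) = 0" using cr by simp
        then show False using False by simp
      qed
      then have "degree r < degree p" unfolding n_def .
      from less[OF this] obtain q where "Lop w z q = r \<and> (q \<noteq> 0 \<longrightarrow> degree q \<le> degree r + \<delta>)"
        unfolding \<delta>_def by blast
      moreover have "degree q \<le> N" if "q \<noteq> 0 \<longrightarrow> degree q \<le> degree r + \<delta>"
        using that \<open>degree r < n\<close> unfolding N_def by (cases "q = 0") auto
      ultimately show ?thesis using that[of q] by blast
    qed
    have "Lop w z (q1 + q2) = p" unfolding Lop_add q2(1) r_def by simp
    moreover have "degree (q1 + q2) \<le> N"
    proof (rule degree_add_le)
      show "degree q1 \<le> N" unfolding q1_def by (rule degree_monom_le)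
    qed (rule q2(2))
    ultimately show ?thesis unfolding N_def n_def \<delta>_def by blast
  qed
qed



definition rep :: "complex poly \<Rightarrow> (nat \<Rightarrow> complex) \<Rightarrow> bool" where
  "rep Q f \<longleftrightarrow> (\<exists>p::complex \<Rightarrow> complex poly. p 0 = 0 \<and> (\<forall>w. p w \<noteq> 0 \<longrightarrow> degree (p w) < order w Q) \<and>
     (\<forall>k \<ge> order 0 Q. f k = (\<Sum>w\<in>{w. poly Q w = 0}. w ^ k * poly (p w) (of_nat k))))"

lemma poly_Lop: "poly (Lop w z q) x = w * poly q (x + 1) - z * poly q x"
  unfolding Lop_def by (simp add: poly_pcompose add.commute)

lemma rec_sol:
  fixes Q :: "complex poly"
  assumes "Q \<noteq> 0" "\<And>k. ev Q f k = 0"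
  shows "rep Q f"
  using assms
proof (induction "degree Q" arbitrary: Q f rule: less_induct)
  case less
  show ?case
  proof (cases "degree Q = 0")
    case True
    have "f k = 0" for k
    proof -
      have "ev Q f k = coeff Q 0 * f k" unfolding ev_def using True by simp
      moreover have "coeff Q 0 \<noteq> 0" using True less.prems(1) leading_coeff_neq_0[of Q] by simp
      ultimately show ?thesis using less.prems(2)[of k] by simp
    qed
    then show ?thesis unfolding rep_def by (intro exI[of _ "\<lambda>_. 0"]) simp
  next
    case False
    then obtain z where z: "poly Q z = 0"
      using fundamental_theorem_of_algebra[of Q] constant_degree[of Q] by auto
    then obtain Q' where Q': "Q = [:-z, 1:] * Q'" using poly_eq_0_iff_dvd by (metis dvdE)
    have Q'0: "Q' \<noteq> 0" using Q' less.prems(1) by auto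
    have "degree ([:-z, 1:] * Q') = degree [:-z, 1:] + degree Q'"
      by (rule degree_mult_eq) (use Q'0 in auto)
    then have dQ: "degree Q = degree Q' + 1" unfolding Q'[symmetric] by simp
    define e where "e = ev [:-z, 1:] f"
    have e: "e k = f (Suc k) - z * f k" for k unfolding e_def by (simp add: ev_linear)
    have "ev Q' e k = 0" for k
      using less.prems(2)[of k] unfolding e_def Q' by (simp add: ev_mult[symmetric] mult.commute)
    from less.hyps[of Q' e, OF _ Q'0 this] dQ obtain p' where
      p'0: "p' 0 = 0" and p'd: "\<And>w. p' w \<noteq> 0 \<Longrightarrow> degree (p' w) < order w Q'" and
      p'f: "\<And>k. k \<ge> order 0 Q' \<Longrightarrow> e k = (\<Sum>w\<in>{w. poly Q' w = 0}. w ^ k * poly (p' w) (of_nat k))"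
      unfolding rep_def by auto
    define R where "R = {w. poly Q w = 0}"
    define R' where "R' = {w. poly Q' w = 0}"
    have fR: "finite R" unfolding R_def using less.prems(1) by (rule poly_roots_finite)
    have RR': "R = insert z R'" unfolding R_def R'_def Q' by auto
    have ord: "order w Q = (if w = z then 1 else 0) + order w Q'" for w
    proof -
      have "order w Q = order w [:-z, 1:] + order w Q'" unfolding Q' using less.prems(1) Q'
        by (intro order_mult) simp
      moreover have "order w [:-z, 1:] = (if w = z then 1 else 0)"
      proof (cases "w = z")
        case True then show ?thesis using order_power_n_n[of z 1] by simp
      next
        case False
        have "order w [:-z, 1:] = 0" by (rule order_0I) (use False in simp)
        then show ?thesis using False by simp
      qed
      ultimately show ?thesis by simp
    qed
    have p'R: "p' w = 0" if "w \<notin> R'" for w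
    proof (rule ccontr)
      assume "p' w \<noteq> 0"
      then have "order w Q' \<noteq> 0" using p'd by fastforce
      then show False using that Q'0 order_root[of Q' w] unfolding R'_def by auto
    qed
    show ?thesis
    proof (cases "z = 0")
      case True
      define p where "p w = smult (inverse w) (p' w \<circ>\<^sub>p [:-1, 1:])" for w
      have "p 0 = 0" unfolding p_def by simp
      moreover have "degree (p w) < order w Q" if "p w \<noteq> 0" for w
      proof -
        have "p' w \<noteq> 0" using that unfolding p_def by auto
        then have "degree (p' w) < order w Q'" by (rule p'd)
        moreover have "degree (p w) \<le> degree (p' w)"
          unfolding p_def by (rule order.trans[OF degree_smult_le]) (simp add: degree_pcompose)
        ultimately show ?thesis using ord[of w] by simp
      qed
      moreover have "f k = (\<Sum>w\<in>R. w ^ k * poly (p w) (of_nat k))" if k: "k \<ge> order 0 Q" for k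
      proof -
        obtain j where kj: "k = Suc j" and j: "j \<ge> order 0 Q'" using k ord[of 0] True
          by (cases k) auto
        have "f k = e j" using e[of j] kj True by simp
        also have "\<dots> = (\<Sum>w\<in>R'. w ^ j * poly (p' w) (of_nat j))" using p'f[OF j] unfolding R'_def .
        also have "\<dots> = (\<Sum>w\<in>R'. w ^ k * poly (p w) (of_nat k))"
        proof (rule sum.cong[OF refl])
          fix w show "w ^ j * poly (p' w) (of_nat j) = w ^ k * poly (p w) (of_nat k)"
          proof (cases "w = 0")
            case True
            then show ?thesis using p'0 \<open>p 0 = 0\<close> by simp
          next
            case False
            have "poly (p w) (of_nat k) = inverse w * poly (p' w) (of_nat j)"
              unfolding p_def kj by (simp add: poly_pcompose)
            then show ?thesis using False unfolding kj by (simp add: field_simps)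
          qed
        qed
        also have "\<dots> = (\<Sum>w\<in>R. w ^ k * poly (p w) (of_nat k))"
          by (rule sum.mono_neutral_left) (use fR RR' True \<open>p 0 = 0\<close> in \<open>auto simp: p_def p'R\<close>)
        finally show ?thesis .
      qed
      ultimately show ?thesis unfolding rep_def R_def by blast
    next
      case False
      define \<delta> where "\<delta> w = (if w = z then 1 else 0 :: nat)" for w
      have "\<forall>w. \<exists>q. Lop w z q = p' w \<and> (q \<noteq> 0 \<longrightarrow> degree q \<le> degree (p' w) + \<delta> w)"
        unfolding \<delta>_def using Lsol False by blast
      then obtain q0 where q0: "\<And>w. Lop w z (q0 w) = p' w \<and> (q0 w \<noteq> 0 \<longrightarrow> degree (q0 w) \<le> degree (p' w) + \<delta> w)"
        by metis
      define q where "q w = (if p' w = 0 then 0 else q0 w)" for w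
      have qL: "Lop w z (q w) = p' w" for w unfolding q_def using q0[of w] by (auto simp: Lop_0)
      have qd: "degree (q w) < order w Q" if "q w \<noteq> 0" for w
      proof -
        have "p' w \<noteq> 0" using that unfolding q_def by auto
        then have "degree (p' w) < order w Q'" by (rule p'd)
        moreover have "degree (q w) \<le> degree (p' w) + \<delta> w" using q0[of w] that unfolding q_def by auto
        ultimately show ?thesis using ord[of w] unfolding \<delta>_def by simp
      qed
      have q0': "q 0 = 0" unfolding q_def using p'0 by simp
      have qR: "q w = 0" if "w \<notin> R'" for w unfolding q_def using p'R[OF that] by simp
      define g where "g k = (\<Sum>w\<in>R'. w ^ k * poly (q w) (of_nat k))" for k
      have fR': "finite R'" unfolding R'_def using Q'0 by (rule poly_roots_finite)
      have ge: "g (Suc k) - z * g k = (\<Sum>w\<in>R'. w ^ k * poly (p' w) (of_nat k))" for k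
      proof -
        have "g (Suc k) - z * g k = (\<Sum>w\<in>R'. w ^ Suc k * poly (q w) (of_nat (Suc k)) - z * (w ^ k * poly (q w) (of_nat k)))"
          unfolding g_def by (simp add: sum_subtractf sum_distrib_left)
        also have "\<dots> = (\<Sum>w\<in>R'. w ^ k * poly (Lop w z (q w)) (of_nat k))"
          by (rule sum.cong[OF refl]) (simp add: poly_Lop algebra_simps)
        finally show ?thesis by (simp add: qL)
      qed
      define s where "s = order 0 Q'"
      define h where "h k = f k - g k" for k
      have hs: "h (Suc k) = z * h k" if "k \<ge> s" for k
        using p'f[of k] that ge[of k] e[of k] unfolding h_def s_def R'_def by (simp add: algebra_simps)
      have hk: "h k = z ^ (k - s) * h s" if "k \<ge> s" for k
        using that
      proof (induction k rule: dec_induct)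
        case base then show ?case by simp
        case (step k) then show ?case using hs[of k] by (simp add: Suc_diff_le)
      qed
      define C where "C = h s / z ^ s"
      have hC: "h k = z ^ k * C" if "k \<ge> s" for k
      proof -
        have "z ^ k = z ^ (k - s) * z ^ s" using that by (simp add: power_add[symmetric])
        then show ?thesis using hk[OF that] False unfolding C_def by (simp add: field_simps)
      qed
      define p where "p w = q w + (if w = z then [:C:] else 0)" for w
      have "p 0 = 0" unfolding p_def using q0' False by simp
      moreover have "degree (p w) < order w Q" if "p w \<noteq> 0" for w
      proof (cases "w = z")
        case True
        have "order z Q \<ge> 1" using ord[of z] by simp
        moreover have "degree (p w) \<le> max (degree (q w)) 0"
          unfolding p_def using True by (intro order.trans[OF degree_add_le_max]) simp
        moreover have "degree (q w) < order w Q \<or> q w = 0" using qd by blast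
        ultimately show ?thesis using True by auto
      next
        case False
        then show ?thesis using that qd unfolding p_def by simp
      qed
      moreover have "f k = (\<Sum>w\<in>R. w ^ k * poly (p w) (of_nat k))" if k: "k \<ge> order 0 Q" for k
      proof -
        have ks: "k \<ge> s" using k ord[of 0] False unfolding s_def by simp
        have "f k = g k + z ^ k * C" using hC[OF ks] unfolding h_def by (metis add.commute diff_eq_eq)
        also have "g k = (\<Sum>w\<in>R. w ^ k * poly (q w) (of_nat k))"
          unfolding g_def
          by (rule sum.mono_neutral_left) (use fR RR' qR in auto)
        also have "z ^ k * C = (\<Sum>w\<in>R. if w = z then w ^ k * C else 0)"
          using fR RR' by (simp add: sum.delta)
        also have "(\<Sum>w\<in>R. w ^ k * poly (q w) (of_nat k)) + (\<Sum>w\<in>R. if w = z then w ^ k * C else 0)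
            = (\<Sum>w\<in>R. w ^ k * poly (p w) (of_nat k))"
          unfolding sum.distrib[symmetric] by (rule sum.cong[OF refl]) (simp add: p_def algebra_simps)
        finally show ?thesis .
      qed
      ultimately show ?thesis unfolding rep_def R_def by blast
    qed
  qed
qed


theorem theorem1:
  fixes n \<sigma> \<sigma>1 :: nat
    and \<alpha> \<beta> m :: "nat \<Rightarrow> nat"
    and i iinv :: "nat \<Rightarrow> nat" and iab :: "nat \<Rightarrow> nat \<Rightarrow> nat"
    and d :: "nat \<Rightarrow> int" and \<gamma> :: "nat \<Rightarrow> int \<Rightarrow> int"
  assumes "\<sigma>1 \<le> \<sigma>"
    and "inj_on \<alpha> {..<\<sigma>1}" and "\<alpha> ` {..<\<sigma>1} \<subseteq> {..<\<sigma>}"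
    and "inj_on \<beta> {..<\<sigma>1}" and "\<beta> ` {..<\<sigma>1} \<subseteq> {..<\<sigma>}"
    and d0: "d 0 = 1" and d1: "d 1 = int n"
    and g1: "\<And>a. a < \<sigma> \<Longrightarrow> \<gamma> a 1 = int (i a)"
    and g0: "\<And>a k. k \<le> 0 \<Longrightarrow> \<gamma> a k = 0"
    and rec_d: "\<And>k. k \<ge> 1 \<Longrightarrow>
        d k = int n * d (k - 1)
              - (\<Sum>l<\<sigma>1. int (iinv (\<beta> l)) * \<gamma> (\<alpha> l) (int k - int (m l) - 1))"
    and rec_g: "\<And>j k. j < \<sigma>1 \<Longrightarrow> k \<ge> 1 \<Longrightarrow>
        \<gamma> (\<alpha> j) (int k) = int (i (\<alpha> j)) * d (k - 1)
              - (\<Sum>l<\<sigma>1. int (iab (\<alpha> j) (\<beta> l)) * \<gamma> (\<alpha> l) (int k - int (m l) - 1))"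
  shows "let P = det (Lambda n \<sigma>1 \<alpha> \<beta> m i iinv iab);
             deg = (\<Sum>j<\<sigma>1. m j) + \<sigma>1 + 1;
             Pc = map_poly (of_int :: int \<Rightarrow> complex) P;
             R = {z. poly Pc z = 0}
         in lead_coeff P = 1 \<and> degree P = deg
          \<and> (\<forall>k. d (k + deg) + (\<Sum>j<deg. coeff P j * d (k + j)) = 0)
          \<and> (\<exists>c :: complex \<Rightarrow> nat \<Rightarrow> complex. \<forall>k \<ge> order 0 Pc.
                of_int (d k) = (\<Sum>z\<in>R. z ^ k * (\<Sum>j<order z Pc. c z j * of_nat k ^ j)))
          \<and> ((\<forall>z\<in>R. cmod z = 1) \<longrightarrow>
               (\<exists>C r. \<forall>k. \<bar>real_of_int (d k)\<bar> \<le> C * (real k + 1) ^ r))"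
proof -
  define P where "P = det (Lambda n \<sigma>1 \<alpha> \<beta> m i iinv iab)"
  define deg where "deg = (\<Sum>j<\<sigma>1. m j) + \<sigma>1 + 1"
  define Pc where "Pc = map_poly (of_int :: int \<Rightarrow> complex) P"
  define R where "R = {z. poly Pc z = 0}"
  have A: "lead_coeff P = 1" "degree P = deg"
    using partA[of n \<sigma>1 \<alpha> \<beta> m i iinv iab] unfolding P_def deg_def by auto
  have B: "ev P d k = 0" for k
    unfolding P_def by (rule partB[where \<gamma>=\<gamma> and \<alpha>=\<alpha> and \<beta>=\<beta>, OF rec_d rec_g])
  have C1: "d (k + deg) + (\<Sum>j<deg. coeff P j * d (k + j)) = 0" for k
  proof -
    have "ev P d k = (\<Sum>j<Suc deg. coeff P j * d (k + j))"
      unfolding ev_def A(2) lessThan_Suc_atMost ..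
    also have "\<dots> = d (k + deg) + (\<Sum>j<deg. coeff P j * d (k + j))"
      using A by simp
    finally show ?thesis using B[of k] by simp
  qed
  have P0: "P \<noteq> 0" using A by auto
  have dPc: "degree Pc = degree P" unfolding Pc_def by (rule degree_map_poly) simp
  have cPc: "coeff Pc j = of_int (coeff P j)" for j unfolding Pc_def by (rule coeff_map_poly) simp
  have Pc0: "Pc \<noteq> 0" using A dPc cPc[of deg] by (metis leading_coeff_0_iff of_int_1 one_neq_zero)
  have evc: "ev Pc (\<lambda>k. of_int (d k)) k = 0" for k
  proof -
    have "ev Pc (\<lambda>k. of_int (d k)) k = of_int (ev P d k)"
      unfolding ev_def dPc cPc by simp
    then show ?thesis using B by simp
  qed
  from rec_sol[OF Pc0 evc] obtain p where p0: "p 0 = 0"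
    and pd: "\<And>w. p w \<noteq> 0 \<Longrightarrow> degree (p w) < order w Pc"
    and pf: "\<And>k. k \<ge> order 0 Pc \<Longrightarrow> of_int (d k) = (\<Sum>w\<in>R. w ^ k * poly (p w) (of_nat k))"
    unfolding rep_def R_def by blast
  define c where "c w j = coeff (p w) j" for w j
  have polyc: "poly (p w) x = (\<Sum>j<order w Pc. c w j * x ^ j)" for w x
  proof (cases "p w = 0")
    case True then show ?thesis unfolding c_def by simp
  next
    case False
    then have "degree (p w) < order w Pc" by (rule pd)
    then have "(\<Sum>j\<le>degree (p w). c w j * x ^ j) = (\<Sum>j<order w Pc. c w j * x ^ j)"
      by (intro sum.mono_neutral_left) (auto simp: c_def coeff_eq_0)
    then show ?thesis unfolding c_def by (simp add: poly_altdef)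
  qed
  have C2: "\<forall>k \<ge> order 0 Pc. of_int (d k) = (\<Sum>z\<in>R. z ^ k * (\<Sum>j<order z Pc. c z j * of_nat k ^ j))"
    using pf polyc by simp
  have fR: "finite R" unfolding R_def using Pc0 by (rule poly_roots_finite)
  have C3: "\<exists>C r. \<forall>k. \<bar>real_of_int (d k)\<bar> \<le> C * (real k + 1) ^ r" if u: "\<forall>z\<in>R. cmod z = 1"
  proof -
    have "0 \<notin> R" using u by auto
    then have o0: "order 0 Pc = 0" unfolding R_def by (intro order_0I) simp
    define K where "K = (\<Sum>z\<in>R. \<Sum>j<order z Pc. cmod (c z j))"
    have "\<bar>real_of_int (d k)\<bar> \<le> K * (real k + 1) ^ deg" for k
    proof -
      have "\<bar>real_of_int (d k)\<bar> = cmod (of_int (d k))" by simp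
      also have "\<dots> = cmod (\<Sum>z\<in>R. z ^ k * (\<Sum>j<order z Pc. c z j * of_nat k ^ j))"
        using C2 o0 by simp
      also have "\<dots> \<le> (\<Sum>z\<in>R. cmod (z ^ k * (\<Sum>j<order z Pc. c z j * of_nat k ^ j)))"
        by (rule norm_sum)
      also have "\<dots> \<le> (\<Sum>z\<in>R. \<Sum>j<order z Pc. cmod (c z j) * (real k + 1) ^ deg)"
      proof (rule sum_mono)
        fix z assume zR: "z \<in> R"
        have "cmod (z ^ k * (\<Sum>j<order z Pc. c z j * of_nat k ^ j)) = cmod (\<Sum>j<order z Pc. c z j * of_nat k ^ j)"
          using u zR by (simp add: norm_mult norm_power)
        also have "\<dots> \<le> (\<Sum>j<order z Pc. cmod (c z j * of_nat k ^ j))" by (rule norm_sum)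
        also have "\<dots> \<le> (\<Sum>j<order z Pc. cmod (c z j) * (real k + 1) ^ deg)"
        proof (rule sum_mono)
          fix j assume "j \<in> {..<order z Pc}"
          then have "j \<le> deg" using order_degree[OF Pc0, of z] dPc A(2) by simp
          have "real k ^ j \<le> (real k + 1) ^ j" by (rule power_mono) auto
          also have "\<dots> \<le> (real k + 1) ^ deg" by (rule power_increasing[OF \<open>j \<le> deg\<close>]) simp
          finally have "real k ^ j \<le> (real k + 1) ^ deg" .
          then show "cmod (c z j * of_nat k ^ j) \<le> cmod (c z j) * (real k + 1) ^ deg"
            by (simp add: norm_mult norm_power mult_left_mono)
        qed
        finally show "cmod (z ^ k * (\<Sum>j<order z Pc. c z j * of_nat k ^ j)) \<le> (\<Sum>j<order z Pc. cmod (c z j) * (real k + 1) ^ deg)" .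
      qed
      also have "\<dots> = K * (real k + 1) ^ deg"
        unfolding K_def by (simp add: sum_distrib_right)
      finally show ?thesis .
    qed
    then show ?thesis by blast
  qed
  show ?thesis
    unfolding Let_def P_def[symmetric] deg_def[symmetric] Pc_def[symmetric] R_def[symmetric]
    using A C1 C2 C3 by blast
qed

end
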